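(* Let $n\ge5$ and define $F:(0,\infty)\to\mathbb{R}$ by $$F(\rho)=\pi n^2\int_0^\infty\frac{s^n}{(1+s^n)^2}\frac{ds}{(\rho^2+s)^2}.$$ Then the metric $F(|a|)\,da\,d\bar a$ on $\mathbb{C}^\times=\mathbb{C}\setminus\{0\}$ (which is invariant under $a\mapsto1/a$) extends to a $C^3$ Riemannian metric $\overline\gamma_n$ on the Riemann sphere $S^2=\mathbb{C}^\times\cup\{0,\infty\}$.
   Context: This metric is the pullback of the induced $L^2$ metric on the space ${\sf Rat}_n^{eq}$ of rotationally equivariant degree $n$ rational maps $W(z)=cz^n$, $c\in\mathbb{C}^\times$, under the $n$-fold covering $a\mapsto[z\mapsto(az)^n]$. *)

theory Defs
  imports "HOL-Analysis.Analysis"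
begin

definition Ffac :: "nat \<Rightarrow> real \<Rightarrow> real" where
  "Ffac n \<rho> = pi * (real n)^2 *
     integral {0<..} (\<lambda>s::real. s ^ n / (1 + s ^ n)^2 / (\<rho>^2 + s)^2)"

fun iter_pd :: "complex list \<Rightarrow> (complex \<Rightarrow> real) \<Rightarrow> complex \<Rightarrow> real" where
  "iter_pd [] g = g"
| "iter_pd (v # vs) g = (\<lambda>x. deriv (\<lambda>t::real. iter_pd vs g (x + of_real t * v)) 0)"

definition Ck_on :: "nat \<Rightarrow> complex set \<Rightarrow> (complex \<Rightarrow> real) \<Rightarrow> bool" where
  "Ck_on k S g \<longleftrightarrow> open S \<and>
     (\<forall>vs v x. length vs < k \<and> set (v # vs) \<subseteq> {1, \<i>} \<and> x \<in> S \<longrightarrow>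
        (\<lambda>t::real. iter_pd vs g (x + of_real t * v)) differentiable (at 0)) \<and>
     (\<forall>vs. length vs \<le> k \<and> set vs \<subseteq> {1, \<i>} \<longrightarrow> continuous_on S (iter_pd vs g))"

end

theory Submission
  imports Defs
begin


definition nsq :: "complex \<Rightarrow> real" where "nsq x = (Re x)^2 + (Im x)^2"

inductive poly2 :: "(complex \<Rightarrow> real) \<Rightarrow> bool" where
  pconst: "poly2 (\<lambda>x. c)"
| pre: "poly2 (\<lambda>x. Re x)"
| pim: "poly2 (\<lambda>x. Im x)"
| padd: "poly2 p \<Longrightarrow> poly2 q \<Longrightarrow> poly2 (\<lambda>x. p x + q x)"
| pmul: "poly2 p \<Longrightarrow> poly2 q \<Longrightarrow> poly2 (\<lambda>x. p x * q x)"

lemma poly2_cont: "poly2 p \<Longrightarrow> continuous_on UNIV p"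
  by (induction rule: poly2.induct) (auto intro!: continuous_intros)

lemma poly2_deriv:
  "poly2 p \<Longrightarrow> \<exists>dp. poly2 dp \<and> (\<forall>x. ((\<lambda>t. p (x + of_real t * v)) has_real_derivative dp x) (at 0))"
proof (induction rule: poly2.induct)
  case (pconst c)
  show ?case by (intro exI[of _ "\<lambda>x. 0"] conjI poly2.pconst allI) (auto intro!: derivative_eq_intros)
next
  case pre
  have "((\<lambda>t. Re (x + of_real t * v)) has_real_derivative Re v) (at 0)" for x
  proof -
    have "((\<lambda>t. Re x + t * Re v) has_real_derivative Re v) (at 0)"
      by (auto intro!: derivative_eq_intros)
    moreover have "(\<lambda>t. Re (x + of_real t * v)) = (\<lambda>t. Re x + t * Re v)" by auto
    ultimately show ?thesis by simp
  qed
  then show ?case by (intro exI[of _ "\<lambda>x. Re v"] conjI poly2.pconst) auto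
next
  case pim
  have "((\<lambda>t. Im (x + of_real t * v)) has_real_derivative Im v) (at 0)" for x
  proof -
    have "((\<lambda>t. Im x + t * Im v) has_real_derivative Im v) (at 0)"
      by (auto intro!: derivative_eq_intros)
    moreover have "(\<lambda>t. Im (x + of_real t * v)) = (\<lambda>t. Im x + t * Im v)" by auto
    ultimately show ?thesis by simp
  qed
  then show ?case by (intro exI[of _ "\<lambda>x. Im v"] conjI poly2.pconst) auto
next
  case (padd p q)
  then obtain dp dq where "poly2 dp" "poly2 dq"
    "\<And>x. ((\<lambda>t. p (x + of_real t * v)) has_real_derivative dp x) (at 0)"
    "\<And>x. ((\<lambda>t. q (x + of_real t * v)) has_real_derivative dq x) (at 0)" by blast
  then show ?case
    by (intro exI[of _ "\<lambda>x. dp x + dq x"] conjI poly2.padd allI) (auto intro!: DERIV_add)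
next
  case (pmul p q)
  then obtain dp dq where "poly2 dp" "poly2 dq"
    and d: "\<And>x. ((\<lambda>t. p (x + of_real t * v)) has_real_derivative dp x) (at 0)"
    "\<And>x. ((\<lambda>t. q (x + of_real t * v)) has_real_derivative dq x) (at 0)" by blast
  have "((\<lambda>t. p (x + of_real t * v) * q (x + of_real t * v)) has_real_derivative dp x * q x + dq x * p x) (at 0)" for x
    using DERIV_mult[OF d(1)[of x] d(2)[of x]] by simp
  moreover have "poly2 (\<lambda>x. dp x * q x + dq x * p x)"
    using \<open>poly2 dp\<close> \<open>poly2 dq\<close> pmul.hyps by (intro poly2.padd poly2.pmul)
  ultimately show ?case by blast
qed

lemma nsq_deriv:
  "((\<lambda>t. nsq (x + of_real t * v)) has_real_derivative 2 * (Re x * Re v + Im x * Im v)) (at 0)"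
proof -
  have "((\<lambda>t. (Re x + t * Re v)^2 + (Im x + t * Im v)^2) has_real_derivative 2 * (Re x * Re v + Im x * Im v)) (at 0)"
    by (auto intro!: derivative_eq_intros simp: algebra_simps)
  moreover have "(\<lambda>t. nsq (x + of_real t * v)) = (\<lambda>t. (Re x + t * Re v)^2 + (Im x + t * Im v)^2)"
    by (auto simp: nsq_def)
  ultimately show ?thesis by simp
qed

lemma nsq_nonneg: "nsq x \<ge> 0" by (simp add: nsq_def)

lemma chain0:
  assumes "(f has_real_derivative f') (at (g 0) within {0..})" "(g has_real_derivative g') (at 0)"
    "\<And>s. g s \<ge> 0"
  shows "((\<lambda>t. f (g t)) has_real_derivative f' * g') (at 0)"
proof -
  have "(f has_real_derivative f') (at (g 0) within range g)"
    by (rule has_field_derivative_subset[OF assms(1)]) (auto intro: assms(3))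
  from DERIV_image_chain[OF this assms(2)] show ?thesis by (simp add: o_def)
qed

inductive good :: "(nat \<Rightarrow> real \<Rightarrow> real) \<Rightarrow> nat \<Rightarrow> (complex \<Rightarrow> real) \<Rightarrow> bool" for gd where
  gbase: "poly2 p \<Longrightarrow> j + m \<le> 3 \<Longrightarrow> good gd m (\<lambda>x. p x * gd j (nsq x))"
| gadd: "good gd m h1 \<Longrightarrow> good gd m h2 \<Longrightarrow> good gd m (\<lambda>x. h1 x + h2 x)"

lemma good_cont:
  assumes "good gd m h" "\<And>j. j \<le> 3 \<Longrightarrow> continuous_on {0..} (gd j)"
  shows "continuous_on UNIV h"
  using assms(1)
proof (induction rule: good.induct)
  case (gbase p j m)
  have "continuous_on UNIV (\<lambda>x. gd j (nsq x))"
    by (rule continuous_on_compose2[OF assms(2)[of j]]) (use gbase in \<open>auto simp: nsq_def intro!: continuous_intros\<close>)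
  then show ?case using poly2_cont[OF gbase(1)] by (intro continuous_intros)
next
  case (gadd m h1 h2) then show ?case by (intro continuous_intros)
qed

lemma good_deriv:
  assumes "good gd k h" "k = Suc m"
    and D: "\<And>j r. j < 3 \<Longrightarrow> r \<ge> 0 \<Longrightarrow> (gd j has_real_derivative gd (Suc j) r) (at r within {0..})"
  shows "\<exists>h'. good gd m h' \<and> (\<forall>x. ((\<lambda>t. h (x + of_real t * v)) has_real_derivative h' x) (at 0))"
  using assms(1,2)
proof (induction arbitrary: m rule: good.induct)
  case (gbase p j k)
  obtain dp where dp: "poly2 dp" "\<And>x. ((\<lambda>t. p (x + of_real t * v)) has_real_derivative dp x) (at 0)"
    using poly2_deriv[OF gbase(1)] by blast
  have pq: "poly2 (\<lambda>x. p x * (2 * (Re x * Re v + Im x * Im v)))"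
    by (intro poly2.pmul poly2.padd poly2.pconst poly2.pre poly2.pim gbase(1))
  have j3: "j < 3" using gbase by simp
  have "good gd m (\<lambda>x. dp x * gd j (nsq x) + (p x * (2 * (Re x * Re v + Im x * Im v))) * gd (Suc j) (nsq x))"
    apply (rule good.gadd)
     apply (rule good.gbase[OF dp(1)]) using gbase apply simp
    apply (rule good.gbase[OF pq]) using gbase apply simp
    done
  moreover have "((\<lambda>t. p (x + of_real t * v) * gd j (nsq (x + of_real t * v))) has_real_derivative
      dp x * gd j (nsq x) + (p x * (2 * (Re x * Re v + Im x * Im v))) * gd (Suc j) (nsq x)) (at 0)" for x
  proof -
    have c: "((\<lambda>t. gd j (nsq (x + of_real t * v))) has_real_derivative gd (Suc j) (nsq x) * (2 * (Re x * Re v + Im x * Im v))) (at 0)"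
      using chain0[of "gd j" _ "\<lambda>t. nsq (x + of_real t * v)", OF _ nsq_deriv nsq_nonneg] D[OF j3 nsq_nonneg]
      by simp
    show ?thesis using DERIV_mult[OF dp(2)[of x] c] by (simp add: algebra_simps)
  qed
  ultimately show ?case by blast
next
  case (gadd k h1 h2)
  then obtain h1' h2' where "good gd m h1'" "good gd m h2'"
    "\<And>x. ((\<lambda>t. h1 (x + of_real t * v)) has_real_derivative h1' x) (at 0)"
    "\<And>x. ((\<lambda>t. h2 (x + of_real t * v)) has_real_derivative h2' x) (at 0)" by blast
  then show ?case
    by (intro exI[of _ "\<lambda>x. h1' x + h2' x"] conjI good.gadd allI) (auto intro!: DERIV_add)
qed

lemma Ck_from_gd:
  assumes D: "\<And>j r. j < 3 \<Longrightarrow> r \<ge> 0 \<Longrightarrow> (gd j has_real_derivative gd (Suc j) r) (at r within {0..})"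
      and C: "\<And>j. j \<le> 3 \<Longrightarrow> continuous_on {0..} (gd j)"
  shows "Ck_on 3 UNIV (\<lambda>x. gd 0 (nsq x))"
proof -
  let ?G = "\<lambda>x. gd 0 (nsq x)"
  have gi: "length vs \<le> 3 \<Longrightarrow> good gd (3 - length vs) (iter_pd vs ?G)" for vs
  proof (induction vs)
    case Nil
    have "good gd 3 (\<lambda>x. (\<lambda>x. 1) x * gd 0 (nsq x))" by (rule good.gbase) (auto intro: poly2.pconst)
    then show ?case by simp
  next
    case (Cons v vs)
    have g: "good gd (Suc (3 - length (v # vs))) (iter_pd vs ?G)"
    proof -
      have "length vs \<le> 3" using Cons.prems by simp
      hence "good gd (3 - length vs) (iter_pd vs ?G)" by (rule Cons.IH)
      moreover have "3 - length vs = Suc (3 - length (v#vs))" using Cons.prems by simp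
      ultimately show ?thesis by metis
    qed
    obtain h' where h': "good gd (3 - length (v # vs)) h'"
      "\<And>x. ((\<lambda>t. iter_pd vs ?G (x + of_real t * v)) has_real_derivative h' x) (at 0)"
      using good_deriv[OF g refl D] by blast
    have "iter_pd (v # vs) ?G = h'"
      by (rule ext) (simp add: DERIV_imp_deriv[OF h'(2)])
    then show ?case using h'(1) by simp
  qed
  show ?thesis unfolding Ck_on_def
  proof (intro conjI allI impI)
    show "open (UNIV :: complex set)" by simp
  next
    fix vs v x assume a: "length vs < 3 \<and> set (v # vs) \<subseteq> {1, \<i>} \<and> x \<in> (UNIV :: complex set)"
    have g: "good gd (Suc (2 - length vs)) (iter_pd vs ?G)"
    proof -
      have "length vs \<le> 3" using a by simp
      hence "good gd (3 - length vs) (iter_pd vs ?G)" by (rule gi)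
      moreover have "3 - length vs = Suc (2 - length vs)" using a by (simp add: numeral_3_eq_3 numeral_2_eq_2 Suc_diff_le)
      ultimately show ?thesis by metis
    qed
    obtain h' where "\<And>x. ((\<lambda>t. iter_pd vs ?G (x + of_real t * v)) has_real_derivative h' x) (at 0)"
      using good_deriv[OF g refl D] by blast
    then show "(\<lambda>t. iter_pd vs ?G (x + of_real t * v)) differentiable (at 0)"
      using real_differentiable_def differentiable_def
      by (meson field_differentiable_imp_differentiable field_differentiable_def)
  next
    fix vs :: "complex list" assume "length vs \<le> 3 \<and> set vs \<subseteq> {1, \<i>}"
    then show "continuous_on UNIV (iter_pd vs ?G)"
      using good_cont[OF gi C] by blast
  qed
qed



definition Dn :: "nat \<Rightarrow> real \<Rightarrow> real" where "Dn n u = (1-u)^(2*n) + u^(2*n)"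
definition cc :: "nat \<Rightarrow> real \<Rightarrow> real" where "cc n u = 2 * u^(2*n+1) * (1-u)^(2*n-3) / (Dn n u)^2"
definition ww :: "real \<Rightarrow> real \<Rightarrow> real" where "ww r u = (1-u)^2 / (r*(1-u)^2 + u^2)"
definition Km :: "nat \<Rightarrow> nat \<Rightarrow> real \<Rightarrow> real \<Rightarrow> real" where "Km n m r u = cc n u * ww r u ^ m"

lemma Dn_pos: "Dn n u > 0"
proof (cases "u = 0")
  case True
  then show ?thesis by (cases n) (simp_all add: Dn_def)
next
  case False
  have "u^(2*n) = (u^2)^n" by (simp add: power_mult)
  also have "\<dots> > 0" using False by simp
  finally have "u^(2*n) > 0" .
  moreover have "(1-u)^(2*n) \<ge> 0" by (simp add: power_mult)
  ultimately show ?thesis unfolding Dn_def by linarith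
qed

lemma Dn_lb: assumes "0 \<le> u" "u \<le> 1" shows "Dn n u \<ge> (1/2)^(2*n)"
proof (cases "u \<ge> 1/2")
  case True
  then have "u^(2*n) \<ge> (1/2)^(2*n)" by (intro power_mono) auto
  moreover have "(1-u)^(2*n) \<ge> 0" using assms by simp
  ultimately show ?thesis unfolding Dn_def by linarith
next
  case False
  then have "(1-u)^(2*n) \<ge> (1/2)^(2*n)" by (intro power_mono) auto
  moreover have "u^(2*n) \<ge> 0" using assms by simp
  ultimately show ?thesis unfolding Dn_def by linarith
qed

lemma q_pos: "(r::real) \<ge> 0 \<Longrightarrow> u \<noteq> 0 \<Longrightarrow> r*(1-u)^2 + u^2 > 0"
proof -
  assume "r \<ge> 0" "u \<noteq> 0"
  then have "u^2 > 0" by simp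
  moreover have "r*(1-u)^2 \<ge> 0" using \<open>r \<ge> 0\<close> by simp
  ultimately show ?thesis by linarith
qed

lemma cc_zero[simp]: "cc n 0 = 0" by (simp add: cc_def)
lemma Km_zero[simp]: "Km n m r 0 = 0" by (simp add: Km_def)

lemma Km_bound:
  assumes r: "r \<ge> 0" and u: "0 \<le> u" "u \<le> 1" and mn: "m \<le> n"
  shows "\<bar>Km n m r u\<bar> \<le> 2 * 2^(4*n) * u"
proof (cases "u = 0")
  case True then show ?thesis by simp
next
  case False
  then have u0: "u > 0" using u by simp
  have qp: "r*(1-u)^2 + u^2 > 0" using q_pos[OF r False] .
  have qge: "r*(1-u)^2 + u^2 \<ge> u^2" using r by simp
  define A where "A = u^(2*n+1)"
  define B where "B = (1-u)^(2*n-3)"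
  have A0: "A \<ge> 0" using u by (simp add: A_def)
  have B0: "B \<ge> 0" "B \<le> 1" using u by (auto simp: B_def intro: power_le_one)
  have w0: "ww r u \<ge> 0" using qp by (simp add: ww_def)
  have wle: "ww r u \<le> 1/u^2"
    unfolding ww_def by (rule frac_le) (use u qp qge u0 in \<open>auto intro: power_le_one\<close>)
  have W: "ww r u ^ m \<le> (1/u^2)^m" by (rule power_mono[OF wle w0])
  have W0: "ww r u ^ m \<ge> 0" using w0 by simp
  have D2: "Dn n u ^ 2 \<ge> (1/2)^(4*n)"
  proof -
    have "((1/2::real)^(2*n))^2 \<le> Dn n u ^ 2"
      by (rule power_mono[OF Dn_lb[OF u]]) simp
    moreover have "((1/2::real)^(2*n))^2 = (1/2)^(4*n)"
      by (simp add: power_mult[symmetric] mult.commute)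
    ultimately show ?thesis by simp
  qed
  have E: "1 / Dn n u ^ 2 \<le> 2^(4*n)"
  proof -
    have "1 / Dn n u ^ 2 \<le> 1 / (1/2::real)^(4*n)"
      by (rule divide_left_mono[OF D2]) (use Dn_pos[of n u] in \<open>auto intro!: mult_pos_pos\<close>)
    then show ?thesis by (simp add: power_one_over)
  qed
  have E0: "1 / Dn n u ^ 2 \<ge> 0" by simp
  have Keq: "Km n m r u = 2 * A * (B * (1 / Dn n u ^ 2) * ww r u ^ m)"
    by (simp add: Km_def cc_def A_def B_def)
  have "B * (1 / Dn n u ^ 2) * ww r u ^ m \<le> 1 * 2^(4*n) * (1/u^2)^m"
    by (intro mult_mono B0 E W W0 E0) (use B0 in auto)
  then have "Km n m r u \<le> 2 * A * (1 * 2^(4*n) * (1/u^2)^m)"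
    unfolding Keq using A0 by (intro mult_left_mono) auto
  also have "\<dots> = 2 * 2^(4*n) * (u^(2*n+1) / u^(2*m))"
    by (simp add: A_def power_one_over power_mult)
  also have "u^(2*n+1) / u^(2*m) = u^(2*n+1-2*m)"
    using u0 mn by (simp add: power_diff)
  also have "u^(2*n+1-2*m) \<le> u^1"
    by (rule power_decreasing) (use mn u in auto)
  finally have up: "Km n m r u \<le> 2 * 2 ^ (4 * n) * u" by (simp add: mult_left_mono)
  have "Km n m r u \<ge> 0"
    unfolding Keq using A0 B0 E0 W0 by simp
  then show ?thesis using up by simp
qed

lemma Km_cont:
  assumes mn: "m \<le> n"
  shows "continuous_on ({0..} \<times> {0..1}) (\<lambda>p. Km n m (fst p) (snd p))"
  unfolding continuous_on_eq_continuous_within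
proof
  fix p :: "real \<times> real" assume pS: "p \<in> {0..} \<times> {0..1}"
  obtain r u where p: "p = (r, u)" by (cases p)
  show "continuous (at p within {0..} \<times> {0..1}) (\<lambda>p. Km n m (fst p) (snd p))"
  proof (cases "r = 0 \<and> u = 0")
    case False
    have "r*(1-u)^2 + u^2 > 0"
      using pS p False by (cases "u = 0") (auto simp: q_pos)
    then have "isCont (\<lambda>p. Km n m (fst p) (snd p)) (r, u)"
      unfolding Km_def cc_def ww_def Dn_def
      by (intro continuous_intros) (use Dn_pos[of n u] in \<open>auto simp: Dn_def\<close>)
    then show ?thesis using p by (simp add: continuous_at_imp_continuous_at_within)
  next
    case True
    have "((\<lambda>p. Km n m (fst p) (snd p)) \<longlongrightarrow> 0) (at p within {0..} \<times> {0..1})"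
    proof (rule Lim_null_comparison)
      show "\<forall>\<^sub>F x in at p within {0..} \<times> {0..1}. norm (Km n m (fst x) (snd x)) \<le> 2 * 2^(4*n) * snd x"
        unfolding eventually_at_filter
        by (rule always_eventually) (auto intro!: Km_bound mn)
      have "((\<lambda>x. 2 * 2^(4*n) * snd x) \<longlongrightarrow> 2 * 2^(4*n) * snd p) (at p within {0..} \<times> {0..1})"
        by (intro tendsto_intros)
      then show "((\<lambda>x. 2 * 2^(4*n) * snd x) \<longlongrightarrow> 0) (at p within {0..} \<times> {0..1})"
        using p True by simp
    qed
    then show ?thesis using p True by (simp add: continuous_within)
  qed
qed

lemma wderiv:
  fixes a b r :: real
  assumes "r*a + b \<noteq> 0"
  shows "((\<lambda>r. a/(r*a+b)) has_real_derivative (-((a/(r*a+b))^2))) (at r)"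
  using assms by (auto intro!: derivative_eq_intros simp: power2_eq_square divide_simps)

lemma Km_deriv:
  assumes r: "r \<ge> 0" and u: "0 \<le> u" and m: "m \<ge> 1"
  shows "((\<lambda>r. Km n m r u) has_real_derivative (-(real m) * Km n (Suc m) r u)) (at r within {0..})"
proof (cases "u = 0")
  case True then show ?thesis by simp
next
  case False
  have qp: "r*(1-u)^2 + u^2 > 0" using q_pos[OF r False] .
  have dw: "((\<lambda>r. ww r u) has_real_derivative (-((ww r u)^2))) (at r)"
    unfolding ww_def using wderiv[where a="(1-u)^2" and b="u^2" and r=r] qp by simp
  have d1: "((\<lambda>r. cc n u * ww r u ^ m) has_real_derivative cc n u * (real m * ww r u ^ (m - 1) * (- ((ww r u)^2)))) (at r)"
    using DERIV_cmult[OF DERIV_power[OF dw, of m], of "cc n u"] by (simp add: mult_ac)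
  moreover have e1: "cc n u * (real m * ww r u ^ (m - 1) * (- ((ww r u)^2))) = -(real m) * (cc n u * ww r u ^ Suc m)"
  proof -
    have "ww r u ^ (m - 1) * ww r u ^ 2 = ww r u ^ Suc m"
      using m by (simp add: power_add[symmetric])
    then show ?thesis by (simp add: algebra_simps)
  qed
  ultimately have "((\<lambda>r. Km n m r u) has_real_derivative (-(real m) * Km n (Suc m) r u)) (at r)"
    unfolding Km_def by (rule DERIV_cong)
  then show ?thesis by (rule has_field_derivative_at_within)
qed

definition kk :: "nat \<Rightarrow> nat \<Rightarrow> real \<Rightarrow> real" where "kk n m r = integral {0..1} (Km n m r)"

lemma Km_cont_r: assumes "m \<le> n" "r \<ge> 0" shows "continuous_on {0..1} (Km n m r)"
proof -
  have "continuous_on {0..1} (\<lambda>u. (\<lambda>p. Km n m (fst p) (snd p)) (r, u))"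
    by (rule continuous_on_compose2[OF Km_cont[OF assms(1)]]) (use assms in \<open>auto intro!: continuous_intros\<close>)
  then show ?thesis by simp
qed

lemma kk_deriv:
  assumes "Suc m \<le> n" "1 \<le> m" "r \<ge> 0"
  shows "(kk n m has_real_derivative (-(real m) * kk n (Suc m) r)) (at r within {0..})"
proof -
  have "((\<lambda>x. integral (cbox 0 1) (\<lambda>u. Km n m x u)) has_real_derivative
          integral (cbox 0 1) (\<lambda>u. -(real m) * Km n (Suc m) r u)) (at r within {0..})"
  proof (rule leibniz_rule_field_derivative)
    fix x t :: real assume "x \<in> {0..}" "t \<in> cbox 0 1"
    then show "((\<lambda>x. Km n m x t) has_real_derivative (-(real m) * Km n (Suc m) x t)) (at x within {0..})"
      using assms by (intro Km_deriv) auto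
  next
    fix x :: real assume "x \<in> {0..}"
    then show "(\<lambda>u. Km n m x u) integrable_on cbox 0 1"
      using assms Km_cont_r[of m n x] by (auto intro!: integrable_continuous_real)
  next
    have "continuous_on ({0..} \<times> cbox 0 1) (\<lambda>p. -(real m) * Km n (Suc m) (fst p) (snd p))"
      using Km_cont[OF assms(1)] by (auto intro!: continuous_intros)
    then show "continuous_on ({0..} \<times> cbox 0 1) (\<lambda>(x, t). -(real m) * Km n (Suc m) x t)"
      by (simp add: case_prod_beta')
  qed (use assms in auto)
  moreover have "kk n m = (\<lambda>x. integral {0..1} (Km n m x))" by (simp add: kk_def[abs_def])
  ultimately show ?thesis by (simp add: kk_def)
qed

lemma kk_cont: assumes "m \<le> n" shows "continuous_on {0..} (kk n m)"
proof -
  have "continuous_on {0..} (\<lambda>x. integral (cbox 0 1) (\<lambda>u. Km n m x u))"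
    using Km_cont[OF assms] by (intro integral_continuous_on_param) (simp add: case_prod_beta')
  then show ?thesis by (simp add: kk_def[abs_def])
qed

definition gd :: "nat \<Rightarrow> nat \<Rightarrow> real \<Rightarrow> real" where
  "gd n j r = (-1)^j * fact (j+1) * pi * (real n)^2 * kk n (j+2) r"

lemma gd_deriv:
  assumes "n \<ge> 5" "j < 3" "r \<ge> 0"
  shows "(gd n j has_real_derivative gd n (Suc j) r) (at r within {0..})"
proof -
  have "(kk n (j+2) has_real_derivative (-(real (j+2)) * kk n (Suc (j+2)) r)) (at r within {0..})"
    using assms by (intro kk_deriv) auto
  then have "((\<lambda>r. (-1)^j * fact (j+1) * pi * (real n)^2 * kk n (j+2) r) has_real_derivative
      (-1)^j * fact (j+1) * pi * (real n)^2 * (-(real (j+2)) * kk n (Suc (j+2)) r)) (at r within {0..})"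
    by (rule DERIV_cmult)
  moreover have "(-1)^j * fact (j+1) * pi * (real n)^2 * (-(real (j+2)) * kk n (Suc (j+2)) r) = gd n (Suc j) r"
    by (simp add: gd_def algebra_simps)
  ultimately show ?thesis by (simp add: gd_def[abs_def])
qed

lemma gd_cont: assumes "n \<ge> 5" "j \<le> 3" shows "continuous_on {0..} (gd n j)"
  unfolding gd_def using kk_cont[of "j+2" n] assms by (auto intro!: continuous_intros)



lemma filterlim_g_left1: "filterlim (\<lambda>x::real. (x/(1-x))^2) at_top (at_left 1)"
proof -
  have a: "filterlim (\<lambda>x::real. 1 - x) (at_right 0) (at_left 1)"
    unfolding filterlim_at
    by (auto simp: eventually_at_filter intro!: tendsto_eq_intros)
  have b: "filterlim (\<lambda>x::real. inverse (1 - x)) at_top (at_left 1)"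
    by (rule filterlim_compose[OF filterlim_inverse_at_top_right a])
  have c: "filterlim (\<lambda>x::real. x * inverse (1 - x)) at_top (at_left 1)"
    by (rule filterlim_tendsto_pos_mult_at_top[OF _ _ b]) (auto intro!: tendsto_eq_intros)
  have "filterlim (\<lambda>x::real. (x * inverse (1 - x))^2) at_top (at_left 1)"
    by (rule filterlim_compose[OF filterlim_pow_at_top c]) (auto intro: filterlim_ident)
  then show ?thesis by (simp add: field_simps)
qed

lemma subst01:
  fixes f h :: "real \<Rightarrow> real"
  assumes cf: "continuous_on {0<..} f" and nn: "\<And>s. s > 0 \<Longrightarrow> f s \<ge> 0"
    and ch: "continuous_on {0..1} h"
    and eq: "\<And>u. 0 < u \<Longrightarrow> u < 1 \<Longrightarrow> h u = f ((u/(1-u))^2) * (2*u/(1-u)^3)"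
  shows "integral {0<..} f = integral {0..1} h"
proof -
  define g where "g = (\<lambda>u::real. (u/(1-u))^2)"
  define g' where "g' = (\<lambda>u::real. 2*u/(1-u)^3)"
  have hint: "set_integrable lborel {0..1} h" by (rule borel_integrable_atLeastAtMost'[OF ch])
  have intg: "set_integrable lborel (einterval 0 1) (\<lambda>x. f (g x) * g' x)"
  proof -
    have "set_integrable lborel {0<..<1} h"
      by (rule set_integrable_subset[OF hint]) auto
    moreover have "set_integrable lborel {0<..<1} h = set_integrable lborel {0<..<1} (\<lambda>x. f (g x) * g' x)"
      by (rule set_integrable_cong) (auto simp: eq g_def g'_def)
    ultimately show ?thesis by (simp add: zero_ereal_def one_ereal_def)
  qed
  have gpos: "0 < x \<Longrightarrow> x < 1 \<Longrightarrow> g x > 0" for x by (simp add: g_def)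
  have d1: "\<And>x. 0 < ereal x \<Longrightarrow> ereal x < 1 \<Longrightarrow> (g has_real_derivative g' x) (at x)"
    unfolding g_def g'_def
    by (auto simp: one_ereal_def zero_ereal_def intro!: derivative_eq_intros) (auto simp: field_simps power2_eq_square power3_eq_cube)
  have d2: "\<And>x. 0 < ereal x \<Longrightarrow> ereal x < 1 \<Longrightarrow> isCont f (g x)"
  proof -
    fix x assume "0 < ereal x" "ereal x < 1"
    then have "g x \<in> {0<..}" using gpos by (simp add: one_ereal_def zero_ereal_def)
    then show "isCont f (g x)" using cf by (simp add: continuous_on_eq_continuous_at)
  qed
  have d3: "\<And>x. 0 < ereal x \<Longrightarrow> ereal x < 1 \<Longrightarrow> isCont g' x"
    unfolding g'_def by (auto simp: one_ereal_def intro!: continuous_intros)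
  have d4: "\<And>x. 0 < ereal x \<Longrightarrow> ereal x < 1 \<Longrightarrow> 0 \<le> f (g x)"
    using gpos nn by (auto simp: one_ereal_def zero_ereal_def)
  have d5: "\<And>x. 0 \<le> ereal x \<Longrightarrow> ereal x \<le> 1 \<Longrightarrow> 0 \<le> g' x"
    unfolding g'_def by (auto simp: one_ereal_def zero_ereal_def)
  have d6: "((ereal \<circ> g \<circ> real_of_ereal) \<longlongrightarrow> 0) (at_right 0)"
    unfolding g_def by (auto simp: zero_ereal_def ereal_tendsto_simps intro!: tendsto_eq_intros)
  have d7: "((ereal \<circ> g \<circ> real_of_ereal) \<longlongrightarrow> \<infinity>) (at_left 1)"
    unfolding g_def using filterlim_g_left1 by (auto simp: one_ereal_def ereal_tendsto_simps)
  note S = interval_integral_substitution_nonneg[of 0 1 g g' f, OF _ d1 d2 d3 d4 d5 d6 d7 intg]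
  have L: "(LBINT x=0..\<infinity>. f x) = integral {0<..} f"
    using interval_integral_eq_integral'[of 0 \<infinity> f] S(1) by (simp add: zero_ereal_def)
  have R: "(LBINT x=0..1. f (g x) * g' x) = integral {0..1} h"
  proof -
    have "(LBINT x=0..1. f (g x) * g' x) = integral (einterval 0 1) (\<lambda>x. f (g x) * g' x)"
      by (rule interval_integral_eq_integral'[OF _ intg]) simp
    also have "\<dots> = integral {0<..<1} h"
      by (simp add: zero_ereal_def one_ereal_def) (rule integral_cong, simp add: eq g_def g'_def)
    also have "\<dots> = integral {0..1} h"
      by (rule integral_subset_negligible) (auto intro: negligible_subset[of "{0,1}"])
    finally show ?thesis .
  qed
  show ?thesis using S(2) L R by simp
qed



lemma alg_core:
  fixes a b r A B c :: real
  assumes "a > 0" "b > 0" "A > 0" "B > 0" "c * b^3 = B" "r*b^2 + a^2 > 0"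
  shows "2 * (a * A) * c / (B + A)^2 * (b^2/(r*b^2+a^2))^2 = (A/B) / (1 + A/B)^2 / (r + a^2/b^2)^2 * (2*a/b^3)"
proof -
  have e1: "1 + A/B = (B+A)/B" using assms by (simp add: field_simps)
  have e2: "r + a^2/b^2 = (r*b^2+a^2)/b^2" using assms by (simp add: field_simps)
  show ?thesis unfolding e1 e2 using assms(1-4,6) by (simp add: field_simps assms(5)[symmetric]) (simp add: divide_simps, simp add: algebra_simps numeral_eq_Suc)
qed

lemma alg1:
  fixes a b r :: real
  assumes "a > 0" "b > 0" "n \<ge> 2" "r \<ge> 0"
  shows "2 * a^(2*n+1) * b^(2*n-3) / (b^(2*n) + a^(2*n))^2 * (b^2/(r*b^2+a^2))^2 =
    ((a/b)^2)^n / (1 + ((a/b)^2)^n)^2 / (r + (a/b)^2)^2 * (2*a/b^3)"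
proof -
  have "((a/b)^2)^n = a^(2*n)/b^(2*n)" by (simp add: power_divide power_mult)
  moreover have "(a/b)^2 = a^2/b^2" by (simp add: power_divide)
  moreover have "a^(2*n+1) = a * a^(2*n)" by simp
  moreover have "b^(2*n-3) * b^3 = b^(2*n)" using assms(3) by (simp add: power_add[symmetric])
  moreover have "r*b^2 + a^2 > 0" using assms by (simp add: add_nonneg_pos)
  ultimately show ?thesis using alg_core[of a b "a^(2*n)" "b^(2*n)" "b^(2*n-3)" r] assms by simp
qed

lemma alg_core2:
  fixes a b r A B c :: real
  assumes "a > 0" "b > 0" "A > 0" "B > 0" "c * a^3 = A" "r > 0"
  shows "2 * (b * B) * c / (A + B)^2 * (a^2/(r*a^2+b^2))^2 = (A/B) / (1 + A/B)^2 / (1/r + a^2/b^2)^2 / r^2 * (2*a/b^3)"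
proof -
  have p: "r*a^2+b^2 > 0" using assms by (simp add: add_pos_pos)
  have e1: "1 + A/B = (B+A)/B" using assms by (simp add: field_simps)
  have e2: "1/r + a^2/b^2 = (r*a^2+b^2)/(r*b^2)" using assms by (simp add: field_simps)
  show ?thesis unfolding e1 e2 using assms(1-4,6) p
    by (simp add: field_simps assms(5)[symmetric]) (simp add: power2_eq_square power3_eq_cube power4_eq_xxxx mult_ac)
qed

lemma alg2:
  fixes a b r :: real
  assumes "a > 0" "b > 0" "n \<ge> 2" "r > 0"
  shows "2 * b^(2*n+1) * a^(2*n-3) / (a^(2*n) + b^(2*n))^2 * (a^2/(r*a^2+b^2))^2 =
    ((a/b)^2)^n / (1 + ((a/b)^2)^n)^2 / (1/r + (a/b)^2)^2 / r^2 * (2*a/b^3)"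
proof -
  have "((a/b)^2)^n = a^(2*n)/b^(2*n)" by (simp add: power_divide power_mult)
  moreover have "(a/b)^2 = a^2/b^2" by (simp add: power_divide)
  moreover have "b^(2*n+1) = b * b^(2*n)" by simp
  moreover have "a^(2*n-3) * a^3 = a^(2*n)" using assms(3) by (simp add: power_add[symmetric])
  ultimately show ?thesis using alg_core2[of a b "a^(2*n)" "b^(2*n)" "a^(2*n-3)" r] assms by simp
qed

lemma integral_reflect01:
  fixes f :: "real \<Rightarrow> real"
  shows "integral {0..1} (\<lambda>u. f (1-u)) = integral {0..1::real} f"
proof -
  define F where "F = (\<lambda>x. f (x + 1))"
  have e0: "integral {-1..0} F = integral {0..1} f"
    unfolding F_def using integral_shift_real_ivl[of 0 1 1 f] by simp
  have e1: "integral {-0..-(-1)} (\<lambda>x. F (-x)) = integral {-1..0::real} F"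
    by (rule Henstock_Kurzweil_Integration.integral_reflect_real)
  have e2: "(\<lambda>x. F (-x)) = (\<lambda>x. f (1 - x))" unfolding F_def
    by (rule ext, rule arg_cong[where f=f]) linarith
  have e3: "{-0..-(-1)} = {0..1::real}" by simp
  from e1 have "integral {0..1} (\<lambda>x. f (1 - x)) = integral {-1..0::real} F"
    unfolding e2 e3 .
  then show ?thesis using e0 by (rule trans)
qed

lemma integral_pos_cont:
  fixes f :: "real \<Rightarrow> real"
  assumes c: "continuous_on {a..b} f" and nn: "\<And>x. x \<in> {a..b} \<Longrightarrow> f x \<ge> 0"
    and x0: "a < x0" "x0 < b" and p: "f x0 > 0"
  shows "integral {a..b} f > 0"
proof -
  have "isCont f x0"
    using c x0 by (metis continuous_on_interior interior_atLeastAtMost_real greaterThanLessThan_iff)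
  then obtain d where d: "d > 0" "\<And>x. x \<noteq> x0 \<Longrightarrow> norm (x - x0) < d \<Longrightarrow> norm (f x - f x0) < f x0 / 2"
    unfolding isCont_def LIM_eq using p by (meson half_gt_zero)
  define e where "e = min (d/2) (min (x0 - a) (b - x0))"
  have e: "e > 0" "e < d" "a \<le> x0 - e" "x0 + e \<le> b" using d x0 by (auto simp: e_def)
  have lb: "f x \<ge> f x0 / 2" if "x \<in> {x0-e..x0+e}" for x
  proof (cases "x = x0")
    case False
    have "norm (x - x0) < d" using that e by auto
    then have "norm (f x - f x0) < f x0 / 2" using d(2)[OF False] by blast
    then show ?thesis using abs_ge_minus_self[of "f x - f x0"] by simp
  qed (use p in simp)
  have int: "f integrable_on {x0-e..x0+e}"
    by (rule integrable_continuous_real, rule continuous_on_subset[OF c]) (use e in auto)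
  have "integral {x0-e..x0+e} (\<lambda>x. f x0 / 2) \<le> integral {x0-e..x0+e} f"
    by (rule integral_le) (use int lb in auto)
  moreover have "integral {x0-e..x0+e} (\<lambda>x. f x0 / 2) = 2*e * (f x0 / 2)"
    using e by simp
  moreover have "integral {x0-e..x0+e} f \<le> integral {a..b} f"
  proof (rule integral_subset_le)
    show "{x0-e..x0+e} \<subseteq> {a..b}" using e by auto
    show "f integrable_on {x0-e..x0+e}" by (rule int)
    show "f integrable_on {a..b}" by (rule integrable_continuous_real[OF c])
    show "\<forall>x\<in>{a..b}. 0 \<le> f x" using nn by blast
  qed
  moreover have "0 < 2*e * (f x0 / 2)" using e p by simp
  ultimately show ?thesis by linarith
qed



lemma phi_cont:
  fixes c d :: real
  assumes "c \<ge> 0" "d \<noteq> 0"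
  shows "continuous_on {0<..} (\<lambda>s::real. s^n/(1+s^n)^2/(c+s)^2 / d)"
proof -
  have "\<forall>s\<in>{0<..}. (1+s^n)^2 \<noteq> (0::real) \<and> (c+s)^2 \<noteq> 0" using assms
    by (auto simp: add_pos_nonneg) (smt (verit) zero_le_power)
  then show ?thesis using assms(2) by (auto intro!: continuous_intros)
qed

lemma Km_nonneg: "0 \<le> u \<Longrightarrow> u \<le> 1 \<Longrightarrow> Km n 2 r u \<ge> 0"
  by (simp add: Km_def cc_def Dn_def)

lemma Ffac_eq:
  assumes n: "n \<ge> 5" and p: "\<rho> > 0"
  shows "Ffac n \<rho> = pi * (real n)^2 * kk n 2 (\<rho>^2)"
proof -
  have "integral {0<..} (\<lambda>s. s^n/(1+s^n)^2/(\<rho>^2+s)^2) = integral {0..1} (Km n 2 (\<rho>^2))"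
  proof (rule subst01)
    show "continuous_on {0<..} (\<lambda>s. s^n/(1+s^n)^2/(\<rho>^2+s)^2)"
      using phi_cont[where c="\<rho>^2" and n=n and d=1] by simp
    show "\<And>s. 0 < s \<Longrightarrow> 0 \<le> s^n/(1+s^n)^2/(\<rho>^2+s)^2" by simp
    show "continuous_on {0..1} (Km n 2 (\<rho>^2))" using Km_cont_r[of 2 n "\<rho>^2"] n by simp
    fix u :: real assume u: "0 < u" "u < 1"
    show "Km n 2 (\<rho>^2) u = ((u/(1-u))^2)^n/(1+((u/(1-u))^2)^n)^2/(\<rho>^2+(u/(1-u))^2)^2 * (2*u/(1-u)^3)"
      unfolding Km_def cc_def ww_def Dn_def using alg1[of u "1-u" n "\<rho>^2"] u n by simp
  qed
  then show ?thesis by (simp add: Ffac_def kk_def)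
qed

lemma Ffac_eq2:
  assumes n: "n \<ge> 5" and p: "\<rho> > 0"
  shows "Ffac n (1/\<rho>) / \<rho>^4 = pi * (real n)^2 * kk n 2 (\<rho>^2)"
proof -
  have I: "integral {0<..} (\<lambda>s. s^n/(1+s^n)^2/(1/\<rho>^2+s)^2/(\<rho>^2)^2) = integral {0..1} (\<lambda>u. Km n 2 (\<rho>^2) (1-u))"
  proof (rule subst01)
    show "continuous_on {0<..} (\<lambda>s. s^n/(1+s^n)^2/(1/\<rho>^2+s)^2/(\<rho>^2)^2)"
      using phi_cont[where c="1/\<rho>^2" and n=n and d="(\<rho>^2)^2"] p by simp
    show "\<And>s. 0 < s \<Longrightarrow> 0 \<le> s^n/(1+s^n)^2/(1/\<rho>^2+s)^2/(\<rho>^2)^2" by simp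
    have "continuous_on {0..1} (\<lambda>u. Km n 2 (\<rho>^2) (1-u))"
      by (rule continuous_on_compose2[OF Km_cont_r[of 2 n "\<rho>^2"]]) (use n in \<open>auto intro!: continuous_intros\<close>)
    then show "continuous_on {0..1} (\<lambda>u. Km n 2 (\<rho>^2) (1-u))" .
    fix u :: real assume u: "0 < u" "u < 1"
    show "Km n 2 (\<rho>^2) (1-u) = ((u/(1-u))^2)^n/(1+((u/(1-u))^2)^n)^2/(1/\<rho>^2+(u/(1-u))^2)^2/(\<rho>^2)^2 * (2*u/(1-u)^3)"
      unfolding Km_def cc_def ww_def Dn_def using alg2[of u "1-u" n "\<rho>^2"] u n p by simp
  qed
  have "Ffac n (1/\<rho>) / \<rho>^4 = pi * (real n)^2 * (integral {0<..} (\<lambda>s. s^n/(1+s^n)^2/(1/\<rho>^2+s)^2) / (\<rho>^2)^2)"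
    by (simp add: Ffac_def power_one_over power_mult[symmetric])
  also have "integral {0<..} (\<lambda>s. s^n/(1+s^n)^2/(1/\<rho>^2+s)^2) / (\<rho>^2)^2 = integral {0<..} (\<lambda>s. s^n/(1+s^n)^2/(1/\<rho>^2+s)^2/(\<rho>^2)^2)"
    by (rule integral_divide[symmetric])
  also have "\<dots> = integral {0..1} (Km n 2 (\<rho>^2))"
    unfolding I by (rule integral_reflect01)
  finally show ?thesis by (simp add: kk_def)
qed

lemma kk_pos:
  assumes n: "n \<ge> 5" and r: "r \<ge> 0"
  shows "kk n 2 r > 0"
  unfolding kk_def
proof (rule integral_pos_cont[of 0 1 _ "1/2"])
  show "continuous_on {0..1} (Km n 2 r)" using Km_cont_r[of 2 n r] n r by simp
  show "\<And>x. x \<in> {0..1} \<Longrightarrow> 0 \<le> Km n 2 r x" using Km_nonneg by auto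
  have "cc n (1/2) > 0" unfolding cc_def using Dn_pos[of n "1/2"] by (intro divide_pos_pos mult_pos_pos) auto
  moreover have "ww r (1/2) > 0" using q_pos[where r=r and u="1/2"] r by (simp add: ww_def)
  ultimately show "0 < Km n 2 r (1/2)" by (simp add: Km_def)
qed auto

theorem proposition4p5:
  fixes n :: nat
  assumes "n \<ge> 5"
  shows "(\<exists>G :: complex \<Rightarrow> real.
            (\<forall>a. a \<noteq> 0 \<longrightarrow> G a = Ffac n (cmod a)) \<and>
            Ck_on 3 UNIV G \<and> (\<forall>a. G a > 0)) \<and>
         (\<exists>H :: complex \<Rightarrow> real.
            (\<forall>w. w \<noteq> 0 \<longrightarrow> H w = Ffac n (1 / cmod w) / (cmod w) ^ 4) \<and>
            Ck_on 3 UNIV H \<and> (\<forall>w. H w > 0))"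
proof -
  define G where "G = (\<lambda>x. gd n 0 (nsq x))"
  have Gv: "G x = pi * (real n)^2 * kk n 2 ((cmod x)^2)" for x
    by (simp only: G_def gd_def nsq_def cmod_power2 add_0) simp
  have Ck: "Ck_on 3 UNIV G"
    unfolding G_def using assms by (intro Ck_from_gd gd_deriv gd_cont) auto
  have pos: "G x > 0" for x
    unfolding Gv using kk_pos[OF assms, of "(cmod x)^2"] assms by simp
  have e1: "G a = Ffac n (cmod a)" if "a \<noteq> 0" for a
    unfolding Gv using Ffac_eq[OF assms, of "cmod a"] that by simp
  have e2: "G w = Ffac n (1 / cmod w) / (cmod w) ^ 4" if "w \<noteq> 0" for w
    unfolding Gv using Ffac_eq2[OF assms, of "cmod w"] that by simp
  show ?thesis using Ck pos e1 e2 by blast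
qed

end
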